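(* With the notation of the context and $\lambda>0$, define for each $x$ $$S_\lambda(x):=\sum_{y=1}^C d(y,\hat y(x))\,\mathbb{I}\{y\in\mathcal{C}_\lambda(x)\},\qquad S_0(x):=\sum_{y=1}^C d(y,\hat y(x))\,\mathbb{I}\{y\in\mathcal{C}(x)\}.$$ Then $S_\lambda(x)\le S_0(x)$ for every $x$, and consequently $\mathbb{E}[S_\lambda(X)]\le\mathbb{E}[S_0(X)]$ for any random input $X$.
   Context: Classification with $C$ classes, labels in $[C]=\{1,\dots,C\}$. A classifier outputs a softmax vector $\hat\pi(x)\in\mathbb{R}^C$ and predicted class $\hat y(x)=\arg\max_i \hat\pi_i(x)$. A map $g:[C]\to[G]$ partitions the classes into $G$ groups. Define $d(y,y'):=\mathbb{I}\{g(y)\neq g(y')\}$. Given any real-valued score function $s(x,y)$ and $\lambda>0$, define the penalized score $s_\lambda(x,y):=s(x,y)+\lambda\, d(y,\hat y(x))$. Given a calibration set $\{(x_i,y_i)\}_{i=1}^n$ and $\alpha\in(0,1)$ with $\lceil (n+1)(1-\alpha)\rceil\le n$, $\hat q$ (resp. $\hat q_\lambda$) is the $\lceil (n+1)(1-\alpha)\rceil$-th smallest value of $\{s(x_i,y_i)\}_{i=1}^n$ (resp. $\{s_\lambda(x_i,y_i)\}_{i=1}^n$). Prediction sets: $\mathcal{C}(x)=\{y: s(x,y)\le\hat q\}$, $\mathcal{C}_\lambda(x)=\{y: s_\lambda(x,y)\le\hat q_\lambda\}$. *)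

theory Defs
  imports "HOL-Probability.Probability"
begin

text \<open>Classes are 1..C (natural numbers), groups 1..G, inputs of an arbitrary type.\<close>

definition dgrp :: "(nat \<Rightarrow> nat) \<Rightarrow> nat \<Rightarrow> nat \<Rightarrow> real" where
  "dgrp g y y' = (if g y \<noteq> g y' then 1 else 0)"

definition kth_smallest :: "nat \<Rightarrow> real list \<Rightarrow> real" where
  "kth_smallest k xs = sort xs ! (k - 1)"

definition qhat :: "real \<Rightarrow> nat \<Rightarrow> (nat \<Rightarrow> real) \<Rightarrow> real" where
  "qhat alpha n sc = kth_smallest (nat \<lceil>(real n + 1) * (1 - alpha)\<rceil>) (map sc [1..<n+1])"

definition pen_score :: "('x \<Rightarrow> nat \<Rightarrow> real) \<Rightarrow> real \<Rightarrow> (nat \<Rightarrow> nat) \<Rightarrow> ('x \<Rightarrow> nat)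
    \<Rightarrow> 'x \<Rightarrow> nat \<Rightarrow> real" where
  "pen_score s lam g yhat x y = s x y + lam * dgrp g y (yhat x)"

definition pred_set :: "nat \<Rightarrow> ('x \<Rightarrow> nat \<Rightarrow> real) \<Rightarrow> real \<Rightarrow> 'x \<Rightarrow> nat set" where
  "pred_set C s q x = {y \<in> {1..C}. s x y \<le> q}"

definition cross_group :: "nat \<Rightarrow> (nat \<Rightarrow> nat) \<Rightarrow> ('x \<Rightarrow> nat) \<Rightarrow> ('x \<Rightarrow> nat set) \<Rightarrow> 'x \<Rightarrow> real" where
  "cross_group C g yhat P x = (\<Sum>y=1..C. dgrp g y (yhat x) * indicator (P x) y)"

end

theory Submission
  imports Defs
begin

lemma filter_map_mono:
  fixes f h :: "nat \<Rightarrow> real"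
  assumes "\<And>i. i \<in> set L \<Longrightarrow> f i \<le> h i"
  shows "length (filter (\<lambda>v. v \<le> t) (map h L)) \<le> length (filter (\<lambda>v. v \<le> t) (map f L))"
  using assms
proof (induction L)
  case (Cons a L)
  have fh: "f a \<le> h a" using Cons.prems by simp
  have ih: "length (filter (\<lambda>v. v \<le> t) (map h L)) \<le> length (filter (\<lambda>v. v \<le> t) (map f L))"
    using Cons.IH Cons.prems by (metis list.set_intros(2))
  show ?case
  proof (cases "h a \<le> t")
    case True
    then have "f a \<le> t" using fh by linarith
    then show ?thesis using True ih by simp
  next
    case False
    then show ?thesis using ih by simp
  qed
qed simp

lemma kth_mono:
  fixes f h :: "nat \<Rightarrow> real"
  assumes le: "\<And>i. i \<in> set L \<Longrightarrow> f i \<le> h i" and k: "k < length L"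
  shows "sort (map f L) ! k \<le> sort (map h L) ! k"
proof (rule ccontr)
  define zs where "zs = sort (map h L)"
  define ws where "ws = sort (map f L)"
  let ?t = "zs ! k"
  let ?P = "\<lambda>v::real. v \<le> ?t"
  assume "\<not> ws ! k \<le> ?t"
  hence gt: "ws ! k > ?t" by simp
  have lz: "length zs = length L" "length ws = length L" by (simp_all add: zs_def ws_def)
  have sz: "sorted zs" "sorted ws" by (simp_all add: zs_def ws_def)
  have "\<forall>v\<in>set (take (Suc k) zs). ?P v"
  proof
    fix v assume "v \<in> set (take (Suc k) zs)"
    then obtain j where j: "j < length (take (Suc k) zs)" "v = take (Suc k) zs ! j"
      by (metis in_set_conv_nth)
    hence "v = zs ! j" "j \<le> k" by auto
    then show "?P v" using sz(1) lz k by (simp add: sorted_nth_mono)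
  qed
  hence "filter ?P (take (Suc k) zs) = take (Suc k) zs" by simp
  hence "Suc k \<le> length (filter ?P (take (Suc k) zs))" using lz k by simp
  also have "\<dots> \<le> length (filter ?P zs)"
    by (metis append_take_drop_id filter_append length_append le_add1)
  also have "\<dots> = length (filter ?P (map h L))"
    unfolding zs_def by (metis filter_sort length_sort)
  also have "\<dots> \<le> length (filter ?P (map f L))" by (rule filter_map_mono[OF le])
  also have "\<dots> = length (filter ?P ws)"
    unfolding ws_def by (metis filter_sort length_sort)
  also have "\<dots> = length (filter ?P (take k ws)) + length (filter ?P (drop k ws))"
    by (metis append_take_drop_id filter_append length_append)
  also have "filter ?P (drop k ws) = []"
  proof -
    have "\<forall>v\<in>set (drop k ws). \<not> ?P v"
    proof
      fix v assume "v \<in> set (drop k ws)"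
      then obtain j where j: "j < length (drop k ws)" "v = drop k ws ! j"
        by (metis in_set_conv_nth)
      hence "v = ws ! (k + j)" "k + j < length ws" by auto
      then have "ws ! k \<le> v" using sz(2) by (simp add: sorted_nth_mono)
      then show "\<not> ?P v" using gt by simp
    qed
    then show ?thesis by (simp add: filter_empty_conv)
  qed
  also have "length (filter ?P (take k ws)) \<le> k"
    by (metis length_filter_le length_take min.bounded_iff order_refl)
  finally show False by simp
qed

lemma kth_shift:
  fixes f :: "nat \<Rightarrow> real"
  assumes k: "k < length L"
  shows "sort (map (\<lambda>i. f i + c) L) ! k = sort (map f L) ! k + c"
proof -
  have "sort (map (\<lambda>i. f i + c) L) = map (\<lambda>v. v + c) (sort (map f L))"
  proof (rule properties_for_sort)
    show "mset (map (\<lambda>v. v + c) (sort (map f L))) = mset (map (\<lambda>i. f i + c) L)"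
      by (simp add: multiset.map_comp o_def)
    have "sorted (sort (map f L))" by simp
    then show "sorted (map (\<lambda>v. v + c) (sort (map f L)))"
      by (simp add: sorted_map)
  qed
  then show ?thesis using k by simp
qed

theorem mainTheorem3:
  fixes C G n :: nat and pi :: "'x \<Rightarrow> nat \<Rightarrow> real" and yhat :: "'x \<Rightarrow> nat"
    and g :: "nat \<Rightarrow> nat" and s :: "'x \<Rightarrow> nat \<Rightarrow> real"
    and xs :: "nat \<Rightarrow> 'x" and ys :: "nat \<Rightarrow> nat" and alpha lam :: real
    and M :: "'w measure" and N :: "'x measure" and X :: "'w \<Rightarrow> 'x"
  defines "S_lam \<equiv> cross_group C g yhat
             (pred_set C (pen_score s lam g yhat)
                (qhat alpha n (\<lambda>i. pen_score s lam g yhat (xs i) (ys i))))"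
    and "S_0 \<equiv> cross_group C g yhat
             (pred_set C s (qhat alpha n (\<lambda>i. s (xs i) (ys i))))"
  assumes softmax: "\<And>x i. i \<in> {1..C} \<Longrightarrow> pi x i \<ge> 0"
    and softmax_sum: "\<And>x. (\<Sum>i=1..C. pi x i) = 1"
    and yhat_argmax: "\<And>x. yhat x \<in> {1..C} \<and> (\<forall>i\<in>{1..C}. pi x i \<le> pi x (yhat x))"
    and groups: "g ` {1..C} \<subseteq> {1..G}"
    and labels: "\<And>i. i \<in> {1..n} \<Longrightarrow> ys i \<in> {1..C}"
    and alpha: "0 < alpha" "alpha < 1"
    and kn: "nat \<lceil>(real n + 1) * (1 - alpha)\<rceil> \<le> n"
    and lam: "lam > 0"
    and M: "prob_space M"
    and X: "X \<in> measurable M N"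
    and meas: "(\<lambda>w. S_lam (X w)) \<in> borel_measurable M"
              "(\<lambda>w. S_0 (X w)) \<in> borel_measurable M"
  shows "(\<forall>x. S_lam x \<le> S_0 x) \<and>
         (\<integral>w. S_lam (X w) \<partial>M) \<le> (\<integral>w. S_0 (X w) \<partial>M)"
proof -
  define k where "k = nat \<lceil>(real n + 1) * (1 - alpha)\<rceil>"
  have n1: "n \<ge> 1"
  proof (rule ccontr)
    assume "\<not> n \<ge> 1" hence "n = 0" by simp
    then have "nat \<lceil>1 - alpha\<rceil> \<le> 0" using kn by simp
    moreover have "1 - alpha > 0" using alpha by simp
    ultimately show False by linarith
  qed
  have kn': "k \<le> n" using kn unfolding k_def .
  have idx: "k - 1 < length [1..<n+1]" using kn' n1 by simp
  define q where "q = qhat alpha n (\<lambda>i. s (xs i) (ys i))"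
  define ql where "ql = qhat alpha n (\<lambda>i. pen_score s lam g yhat (xs i) (ys i))"
  have "ql \<le> sort (map (\<lambda>i. s (xs i) (ys i) + lam) [1..<n+1]) ! (k - 1)"
    unfolding ql_def qhat_def kth_smallest_def k_def[symmetric]
  proof (rule kth_mono[OF _ idx])
    fix i show "pen_score s lam g yhat (xs i) (ys i) \<le> s (xs i) (ys i) + lam"
      using lam by (simp add: pen_score_def dgrp_def)
  qed
  also have "\<dots> = q + lam"
    unfolding q_def qhat_def kth_smallest_def k_def[symmetric] by (rule kth_shift[OF idx])
  finally have qq: "ql \<le> q + lam" .
  have pw: "\<forall>x. S_lam x \<le> S_0 x"
  proof
    fix x
    show "S_lam x \<le> S_0 x"
      unfolding S_lam_def S_0_def cross_group_def ql_def[symmetric] q_def[symmetric]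
    proof (rule sum_mono)
      fix y assume y: "y \<in> {1..C}"
      show "dgrp g y (yhat x) * indicator (pred_set C (pen_score s lam g yhat) ql x) y
          \<le> dgrp g y (yhat x) * indicator (pred_set C s q x) y"
        using y qq by (auto simp: dgrp_def pred_set_def pen_score_def indicator_def)
    qed
  qed
  have bnd: "\<And>P x. \<bar>cross_group C g yhat P x\<bar> \<le> real C"
  proof -
    fix P x
    have "\<bar>cross_group C g yhat P x\<bar> \<le> (\<Sum>y=1..C. \<bar>dgrp g y (yhat x) * indicator (P x) y\<bar>)"
      unfolding cross_group_def by (rule sum_abs)
    also have "\<dots> \<le> (\<Sum>y=1..C. (1::real))"
      by (rule sum_mono) (auto simp: dgrp_def indicator_def)
    finally show "\<bar>cross_group C g yhat P x\<bar> \<le> real C" by simp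
  qed
  interpret prob_space M by (rule M)
  have i1: "integrable M (\<lambda>w. S_lam (X w))"
    by (rule integrable_const_bound[where B="real C", OF _ meas(1)]) (simp add: S_lam_def bnd)
  have i2: "integrable M (\<lambda>w. S_0 (X w))"
    by (rule integrable_const_bound[where B="real C", OF _ meas(2)]) (simp add: S_0_def bnd)
  have "(\<integral>w. S_lam (X w) \<partial>M) \<le> (\<integral>w. S_0 (X w) \<partial>M)"
    by (rule integral_mono[OF i1 i2]) (use pw in auto)
  with pw show ?thesis by simp
qed

end
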